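(* For every integer $n\ge2$, the $n$-th Bernoulli number satisfies $B_n=(-1)^n\,q_{n-1}(1)\,n!$.
   Context: The Bernoulli numbers $B_n$ are defined by $\frac{z}{e^z-1}=\sum_{n\ge0}\frac{B_n}{n!}z^n$ for $|z|<2\pi$. The polynomials $p_j,q_j$ ($j\ge1$) are defined recursively by $p_1(x)=\frac{x-x^2}{2}$, $q_j(x)=\int_0^xp_j(t)\,dt$, and $p_{j+1}(x)=q_j(x)-x\,q_j(1)$. *)

theory Defs
  imports "HOL-Analysis.Analysis"
begin

text \<open>Bernoulli numbers, defined by the generating function
  z/(e^z - 1) = sum_n B_n/n! z^n for |z| < 2 pi (z real, z \<noteq> 0, where the
  left-hand side is literally defined; the coefficients are determined uniquely).\<close>
definition bernoulli :: "nat \<Rightarrow> real" where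
  "bernoulli = (THE B. \<forall>z::real. z \<noteq> 0 \<and> \<bar>z\<bar> < 2 * pi \<longrightarrow>
       (\<lambda>n. B n / fact n * z ^ n) sums (z / (exp z - 1)))"

definition int0 :: "(real \<Rightarrow> real) \<Rightarrow> real \<Rightarrow> real" where
  "int0 f x = (if 0 \<le> x then integral {0..x} f else - integral {x..0} f)"

text \<open>p_1(x) = (x - x^2)/2, p_{j+1}(x) = q_j(x) - x q_j(1), q_j(x) = int_0^x p_j.
  Index 0 is a dummy value (the paper's sequences start at j = 1).\<close>
fun pp :: "nat \<Rightarrow> real \<Rightarrow> real" where
  "pp 0 x = 0"
| "pp (Suc 0) x = (x - x^2) / 2"
| "pp (Suc (Suc j)) x = int0 (pp (Suc j)) x - x * int0 (pp (Suc j)) 1"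

definition qq :: "nat \<Rightarrow> real \<Rightarrow> real" where
  "qq j x = int0 (pp j) x"

end

theory Submission imports Defs "HOL-Complex_Analysis.Complex_Analysis" begin

definition Fc :: "complex fps" where "Fc = fps_X / (fps_exp 1 - 1)"
definition fc :: "complex \<Rightarrow> complex" where "fc z = (if z = 0 then 1 else z / (exp z - 1))"

lemma subdeg_E: "subdegree (fps_exp (1::complex) - 1) = 1"
  by (rule subdegreeI) auto

lemma subdeg_E': "subdegree (1 - fps_exp (1::complex)) = 1"
  by (rule subdegreeI) auto

lemma fc_fps: "fc has_fps_expansion Fc"
proof -
  have "(\<lambda>x. if x = 0 then 1 else x / (exp x - 1)) has_fps_expansion (fps_X / (fps_exp (1::complex) - 1))"
    by (rule has_fps_expansion_divide) (auto intro!: fps_expansion_intros simp: subdeg_E subdeg_E')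
  thus ?thesis unfolding Fc_def fc_def .
qed

lemma Fc_rec: "Fc * (fps_exp 1 - 1) = fps_X"
proof -
  have "(fps_exp (1::complex) - 1) dvd fps_X"
    by (subst fps_dvd_iff) (auto simp: subdeg_E subdeg_E')
  thus ?thesis unfolding Fc_def by simp
qed

lemma exp_ne1: assumes "z \<noteq> 0" "norm z < 2*pi" shows "exp z \<noteq> (1::complex)"
proof
  assume "exp z = 1"
  then obtain n::int where n: "Re z = 0" "Im z = of_int (2*n) * pi" by (auto simp: exp_eq_1)
  have "n \<noteq> 0" using n assms(1) complex_eqI by force
  hence "\<bar>of_int (2*n) * pi\<bar> \<ge> 2 * pi" by (auto simp: abs_mult)
  moreover have "\<bar>Im z\<bar> \<le> norm z" by (rule abs_Im_le_cmod)
  ultimately show False using n assms(2) by linarith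
qed

lemma fc_holo: "fc holomorphic_on ball 0 (2*pi)"
proof -
  obtain s where s: "open s" "0 \<in> s" "fc holomorphic_on s"
    using has_fps_expansion_imp_holomorphic[OF fc_fps] by blast
  have "fc holomorphic_on (ball 0 (2*pi) - {0})"
  proof -
    have "(\<lambda>z. z / (exp z - 1)) holomorphic_on (ball 0 (2*pi) - {0})"
      using exp_ne1 by (intro holomorphic_intros) auto
    thus ?thesis by (rule holomorphic_transform) (auto simp: fc_def)
  qed
  hence "fc holomorphic_on ((ball 0 (2*pi) - {0}) \<union> (s \<inter> ball 0 (2*pi)))"
    using s by (intro holomorphic_on_Un) (auto intro: holomorphic_on_subset)
  moreover have "(ball 0 (2*pi) - {0}) \<union> (s \<inter> ball 0 (2*pi)) = ball 0 (2*pi)"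
    using s by auto
  ultimately show ?thesis by simp
qed

lemma fc_sums: "norm z < 2*pi \<Longrightarrow> (\<lambda>n. fps_nth Fc n * z ^ n) sums fc z"
  by (rule has_fps_expansion_imp_sums_complex[OF fc_fps, where r="ereal (2*pi)"]) (use fc_holo in auto)

definition a :: "nat \<Rightarrow> real" where "a n = Re (fps_nth Fc n)"

lemma E_nth: "(fps_exp (1::complex) - 1) $ Suc k = 1 / fact (Suc k)"
  by (simp add: fps_exp_def)

lemma Fc_term: assumes "i \<in> {..m}"
  shows "fps_nth Fc i * fps_nth (fps_exp 1 - 1) (Suc m - i) = fps_nth Fc i / fact (Suc m - i)"
proof -
  have "Suc m - i = Suc (m - i)" using assms by (simp add: Suc_diff_le)
  thus ?thesis by (simp only: E_nth) (simp add: divide_inverse)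
qed

lemma Re_div_fact: "Re (c / fact k) = Re c / fact k"
  by (metis Re_divide_of_real of_real_fact)

lemma Fc_rec_nth: "(\<Sum>i\<le>m. fps_nth Fc i / fact (Suc m - i)) = (if m = 0 then 1 else 0)"
proof -
  have "fps_nth (Fc * (fps_exp 1 - 1)) (Suc m) = (if m = 0 then 1 else 0)"
    by (simp add: Fc_rec)
  moreover have "fps_nth (Fc * (fps_exp 1 - 1)) (Suc m) = (\<Sum>i\<le>m. fps_nth Fc i / fact (Suc m - i))"
  proof -
    have "fps_nth (Fc * (fps_exp 1 - 1)) (Suc m) = (\<Sum>i\<le>Suc m. fps_nth Fc i * fps_nth (fps_exp 1 - 1) (Suc m - i))"
      by (simp only: fps_mult_nth atLeast0AtMost)
    also have "\<dots> = (\<Sum>i\<le>m. fps_nth Fc i * fps_nth (fps_exp 1 - 1) (Suc m - i))"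
      by (subst sum.atMost_Suc) simp
    also have "\<dots> = (\<Sum>i\<le>m. fps_nth Fc i / fact (Suc m - i))"
      by (rule sum.cong[OF refl]) (simp add: Fc_term)
    finally show ?thesis .
  qed
  ultimately show ?thesis by simp
qed

lemma a_rec: "(\<Sum>i\<le>m. a i / fact (Suc m - i)) = (if m = 0 then 1 else 0)"
proof -
  have "(\<Sum>i\<le>m. a i / fact (Suc m - i)) = Re (\<Sum>i\<le>m. fps_nth Fc i / fact (Suc m - i))"
    by (simp add: Re_sum Re_div_fact a_def)
  also have "\<dots> = Re (if m = 0 then 1 else 0)" by (simp only: Fc_rec_nth)
  finally show ?thesis by simp
qed

lemma a_sums: assumes "z \<noteq> 0" "\<bar>z\<bar> < 2*pi" shows "(\<lambda>n. a n * z ^ n) sums (z / (exp z - 1))"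
proof -
  have "(\<lambda>n. fps_nth Fc n * of_real z ^ n) sums fc (of_real z)"
    using assms by (intro fc_sums) auto
  from sums_Re[OF this] have "(\<lambda>n. a n * z ^ n) sums Re (fc (of_real z))"
    by (simp add: a_def flip: of_real_power)
  also have "fc (of_real z) = of_real (z / (exp z - 1))"
    using assms by (simp add: fc_def exp_of_real)
  finally show ?thesis by simp
qed

lemma powser_unique0:
  fixes d :: "nat \<Rightarrow> real"
  assumes r: "r > 0" and S: "\<And>z. z \<noteq> 0 \<Longrightarrow> \<bar>z\<bar> < r \<Longrightarrow> (\<lambda>n. d n * z ^ n) sums 0"
  shows "d n = 0"
proof -
  define f where "f = (\<lambda>u::real. if u = 0 then d 0 else 0)"
  have S': "(\<lambda>n. d n * u ^ n) sums f u" if "norm u < r" for u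
  proof (cases "u = 0")
    case True
    have "(\<lambda>n. if n = 0 then d 0 else 0) sums d 0" by (rule sums_single)
    moreover have "(\<lambda>n. d n * u ^ n) = (\<lambda>n. if n = 0 then d 0 else 0)" using True by (auto simp: fun_eq_iff)
    ultimately show ?thesis using True by (simp add: f_def)
  next
    case False thus ?thesis using S[of u] that by (simp add: f_def)
  qed
  have "f has_fps_expansion Abs_fps d"
  proof (rule has_fps_expansionI)
    have "eventually (\<lambda>u. u \<in> ball 0 r) (nhds (0::real))"
      using r by (intro eventually_nhds_in_open) auto
    thus "\<forall>\<^sub>F u in nhds 0. (\<lambda>n. fps_nth (Abs_fps d) n * u ^ n) sums f u"
      by eventually_elim (use S' in auto)
  qed
  hence "continuous (at 0) f" by (rule has_fps_expansion_imp_continuous)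
  hence "(f \<longlongrightarrow> d 0) (at 0)" by (simp add: continuous_at f_def)
  moreover have "(f \<longlongrightarrow> 0) (at 0)"
  proof -
    have "\<forall>\<^sub>F u in at 0. 0 = f u" by (auto simp: f_def eventually_at_filter)
    thus ?thesis by (rule Lim_transform_eventually[OF tendsto_const])
  qed
  ultimately have d0: "d 0 = 0" using tendsto_unique by (metis trivial_limit_at)
  show "d n = 0"
  proof (rule ccontr)
    assume "d n \<noteq> 0"
    with d0 have "n > 0" by (cases n) auto
    have S0: "(\<lambda>k. d k * (x - 0) ^ k) sums 0" if "norm (x - 0) < r" for x
      using S'[of x] that d0 by (cases "x = 0") (simp_all add: f_def)
    show False
    proof (rule powser_0_nonzero[where r=r and a=d and \<xi>=0 and f="\<lambda>x::real. 0::real" and m=n, OF r S0 _ \<open>d n \<noteq> 0\<close> \<open>n > 0\<close>])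
      fix s :: real assume "0 < s" and H: "\<And>z::real. z \<in> cball 0 s - {0} \<Longrightarrow> (\<lambda>x. 0::real) z \<noteq> 0"
      show False using H[of s] \<open>0 < s\<close> by (auto simp: dist_real_def)
    qed (simp_all, (rule refl)?)
  qed
qed


lemma bern_a: "bernoulli = (\<lambda>n. a n * fact n)"
  unfolding bernoulli_def
proof (rule the_equality)
  show "\<forall>z::real. z \<noteq> 0 \<and> \<bar>z\<bar> < 2 * pi \<longrightarrow> (\<lambda>n. a n * fact n / fact n * z ^ n) sums (z / (exp z - 1))"
    using a_sums by simp
next
  fix B assume H: "\<forall>z::real. z \<noteq> 0 \<and> \<bar>z\<bar> < 2 * pi \<longrightarrow> (\<lambda>n. B n / fact n * z ^ n) sums (z / (exp z - 1))"
  have "B n / fact n - a n = 0" for n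
  proof (rule powser_unique0[where r="2*pi"])
    fix z :: real assume "z \<noteq> 0" "\<bar>z\<bar> < 2*pi"
    from sums_diff[OF H[rule_format, OF conjI[OF this]] a_sums[OF this]]
    show "(\<lambda>n. (B n / fact n - a n) * z ^ n) sums 0" by (simp add: algebra_simps)
  qed simp
  thus "B = (\<lambda>n. a n * fact n)" by (auto simp: fun_eq_iff field_simps)
qed

lemma a_odd: assumes "odd n" "n \<ge> 3" shows "a n = 0"
proof -
  have "a k * (-1)^k - a k - (if k = 1 then 1 else 0) = 0" for k
  proof (rule powser_unique0[where r="2*pi" and d="\<lambda>k. a k * (-1)^k - a k - (if k = 1 then 1 else 0)"])
    fix z :: real assume z: "z \<noteq> 0" "\<bar>z\<bar> < 2*pi"
    have e: "exp z \<noteq> 1" using z by simp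
    have 1: "(\<lambda>n. a n * (-z) ^ n) sums (-z / (exp (-z) - 1))"
      using z by (intro a_sums) auto
    have "-z / (exp (-z) - 1) = z + z / (exp z - 1)"
      using e by (simp add: exp_minus field_simps)
    with 1 have 1: "(\<lambda>n. a n * (-z) ^ n) sums (z + z / (exp z - 1))" by simp
    have 2: "(\<lambda>n. (if n = 1 then 1 else 0) * z ^ n) sums z"
    proof -
      have "(\<lambda>n. if n = 1 then z ^ n else 0) sums z ^ 1" by (rule sums_single)
      moreover have "(\<lambda>n. if n = 1 then z ^ n else 0) = (\<lambda>n. (if n = 1 then 1 else 0) * z ^ n)"
        by auto
      ultimately show ?thesis by simp
    qed
    have eq: "(\<lambda>n. a n * (-z)^n - a n * z^n - (if n=1 then 1 else 0)*z^n) = (\<lambda>n. (a n * (-1)^n - a n - (if n = 1 then 1 else 0)) * z^n)"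
      by (simp only: power_minus[of z] left_diff_distrib mult.assoc)
    have v: "z + z / (exp z - 1) - z / (exp z - 1) - z = 0" by simp
    from sums_diff[OF sums_diff[OF 1 a_sums[OF z]] 2]
    show "(\<lambda>n. (a n * (-1)^n - a n - (if n = 1 then 1 else 0)) * z ^ n) sums 0"
      by (simp only: eq v)
  qed simp
  from this[of n] assms show ?thesis by auto
qed


lemma pow_deriv: "((\<lambda>x::real. x^(Suc m)/fact (Suc m)) has_real_derivative x^m/fact m) (at x)"
proof -
  have "((\<lambda>x::real. x^(Suc m)/fact (Suc m)) has_real_derivative (of_nat (Suc m) * x^m) / fact (Suc m)) (at x)"
    using DERIV_cdivide[OF DERIV_pow[of "Suc m" x], of "fact (Suc m)"] by simp
  moreover have "(of_nat (Suc m) * x^m) / fact (Suc m) = x^m / (fact m :: real)"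
    by (simp add: field_simps del: of_nat_Suc)
  ultimately show ?thesis by simp
qed

lemma int0_eq:
  assumes D: "\<And>t. (F has_real_derivative f t) (at t)" and F0: "F 0 = 0"
  shows "int0 f x = F x"
proof (cases "0 \<le> x")
  case True
  have "(f has_integral F x - F 0) {0..x}"
    by (rule fundamental_theorem_of_calculus)
       (use True D in \<open>auto simp flip: has_real_derivative_iff_has_vector_derivative intro: has_field_derivative_at_within\<close>)
  then show ?thesis using True F0 by (simp add: int0_def integral_unique)
next
  case False
  have "(f has_integral F 0 - F x) {x..0}"
    by (rule fundamental_theorem_of_calculus)
       (use False D in \<open>auto simp flip: has_real_derivative_iff_has_vector_derivative intro: has_field_derivative_at_within\<close>)
  then show ?thesis using False F0 by (simp add: int0_def integral_unique)
qed

definition P :: "nat \<Rightarrow> real \<Rightarrow> real" where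
  "P j x = - (\<Sum>k\<le>j. a k * (x^(Suc (j - k)) / fact (Suc (j - k))))"
definition Q :: "nat \<Rightarrow> real \<Rightarrow> real" where
  "Q j x = - (\<Sum>k\<le>j. a k * (x^(Suc (Suc (j - k))) / fact (Suc (Suc (j - k)))))"

lemma Q_deriv: "(Q j has_real_derivative P j x) (at x)"
  unfolding Q_def P_def
  by (intro DERIV_minus DERIV_sum DERIV_cmult pow_deriv)

lemma Q0: "Q j 0 = 0" by (simp add: Q_def)

lemma int0_P: "int0 (P j) x = Q j x"
  by (rule int0_eq[OF Q_deriv Q0])

lemma a0: "a 0 = 1" using a_rec[of 0] by simp
lemma a1: "a (Suc 0) = -1/2" using a_rec[of 1] a0 by (simp add: numeral_2_eq_2)

lemma Q1: "Q j 1 = a (Suc j)"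
proof -
  have "0 = (\<Sum>i\<le>Suc j. a i / fact (Suc (Suc j) - i))" using a_rec[of "Suc j"] by simp
  also have "\<dots> = a (Suc j) + (\<Sum>i\<le>j. a i / fact (Suc (Suc j) - i))"
    by (simp add: sum.atMost_Suc)
  also have "(\<Sum>i\<le>j. a i / fact (Suc (Suc j) - i)) = - Q j 1"
    unfolding Q_def by (auto intro!: sum.cong simp: Suc_diff_le)
  finally show ?thesis by simp
qed

lemma P_step: "P (Suc j) x = Q j x - x * a (Suc j)"
proof -
  have "(\<Sum>k\<le>Suc j. a k * (x^(Suc (Suc j - k)) / fact (Suc (Suc j - k))))
        = (\<Sum>k\<le>j. a k * (x^(Suc (Suc j - k)) / fact (Suc (Suc j - k)))) + a (Suc j) * x"
    by (simp add: sum.atMost_Suc)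
  also have "(\<Sum>k\<le>j. a k * (x^(Suc (Suc j - k)) / fact (Suc (Suc j - k))))
        = (\<Sum>k\<le>j. a k * (x^(Suc (Suc (j - k))) / fact (Suc (Suc (j - k)))))"
    by (auto intro!: sum.cong simp: Suc_diff_le)
  finally show ?thesis unfolding P_def Q_def by (simp add: algebra_simps)
qed

lemma pp_P: "pp (Suc j) = P (Suc j)"
proof (induction j)
  case 0
  show ?case
    by (auto simp: fun_eq_iff P_def a0 a1 power2_eq_square field_simps)
next
  case (Suc j)
  show ?case
    unfolding pp.simps(3) Suc.IH int0_P Q1 by (rule ext) (rule P_step[symmetric])
qed

theorem corollary9:
  fixes n :: nat
  assumes "n \<ge> 2"
  shows "bernoulli n = (-1) ^ n * qq (n - 1) 1 * fact n"
proof -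
  obtain j where j: "n = Suc (Suc j)" using assms by (metis add_2_eq_Suc le_Suc_ex)
  have "qq (n - 1) 1 = a n"
    using j by (simp add: qq_def pp_P int0_P Q1 del: pp.simps)
  moreover have "a n = (-1)^n * a n"
  proof (cases "even n")
    case False
    with assms have "n \<ge> 3" by (cases "n = 2") auto
    with False show ?thesis using a_odd by simp
  qed simp
  ultimately show ?thesis by (simp add: bern_a)
qed

end
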